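(* Let $G$ and $H$ be nontrivial finite groups with $\gcd(|G|,|H|)=1$. Then the cyclic graph $\Delta(G\times H)$ is connected and $\mathrm{diam}(\Delta(G\times H))\le 3$.
   Context: For a finite group $X$, the cyclic graph $\Delta(X)$ has vertex set $X^{\#}=X\setminus\{1\}$, and distinct vertices $x,y$ are adjacent if and only if the subgroup $\langle x,y\rangle$ is cyclic. The diameter is the maximum graph distance between two vertices. *)

theory Defs
  imports "HOL-Algebra.Algebra"
begin

definition cg_vertices :: "('a, 'b) monoid_scheme \<Rightarrow> 'a set" where
  "cg_vertices Gr = carrier Gr - {one Gr}"

definition cg_adj :: "('a, 'b) monoid_scheme \<Rightarrow> 'a \<Rightarrow> 'a \<Rightarrow> bool" where
  "cg_adj Gr x y \<longleftrightarrow> x \<in> cg_vertices Gr \<and> y \<in> cg_vertices Gr \<and> x \<noteq> y \<and>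
     cyclic_group (subgroup_generated Gr {x, y})"

definition cg_walk :: "('a, 'b) monoid_scheme \<Rightarrow> 'a \<Rightarrow> 'a \<Rightarrow> nat \<Rightarrow> bool" where
  "cg_walk Gr x y n \<longleftrightarrow> (\<exists>vs. length vs = Suc n \<and> set vs \<subseteq> cg_vertices Gr \<and>
     hd vs = x \<and> last vs = y \<and> (\<forall>i < n. cg_adj Gr (vs ! i) (vs ! Suc i)))"

definition cg_connected :: "('a, 'b) monoid_scheme \<Rightarrow> bool" where
  "cg_connected Gr \<longleftrightarrow> (\<forall>x \<in> cg_vertices Gr. \<forall>y \<in> cg_vertices Gr. \<exists>n. cg_walk Gr x y n)"

definition cg_dist :: "('a, 'b) monoid_scheme \<Rightarrow> 'a \<Rightarrow> 'a \<Rightarrow> nat" where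
  "cg_dist Gr x y = (LEAST n. cg_walk Gr x y n)"

definition cg_diam :: "('a, 'b) monoid_scheme \<Rightarrow> nat" where
  "cg_diam Gr = Max {cg_dist Gr x y | x y. x \<in> cg_vertices Gr \<and> y \<in> cg_vertices Gr}"

end

theory Submission
  imports Defs "HOL-Number_Theory.Cong"
begin

lemma pow_mod_ord_aux:
  assumes "group G" "x \<in> carrier G"
  shows "x [^]\<^bsub>G\<^esub> (n::nat) = x [^]\<^bsub>G\<^esub> (n mod group.ord G x)"
proof -
  interpret group G by fact
  define o' where "o' = ord x"
  have "x [^]\<^bsub>G\<^esub> n = x [^]\<^bsub>G\<^esub> (n mod o' + o' * (n div o'))" by simp
  also have "\<dots> = x [^]\<^bsub>G\<^esub> (n mod o') \<otimes>\<^bsub>G\<^esub> (x [^]\<^bsub>G\<^esub> o') [^]\<^bsub>G\<^esub> (n div o')"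
    using assms(2) by (simp add: nat_pow_mult nat_pow_pow)
  also have "\<dots> = x [^]\<^bsub>G\<^esub> (n mod o')" using assms(2) by (simp add: o'_def)
  finally show ?thesis by (simp add: o'_def)
qed

lemma DirProd_pow_aux:
  "(a, b) [^]\<^bsub>G \<times>\<times> H\<^esub> (n::nat) = (a [^]\<^bsub>G\<^esub> n, b [^]\<^bsub>H\<^esub> n)"
  by (induction n) auto

lemma gen_pow_in_aux:
  assumes "group K" "x \<in> carrier K"
  shows "x [^]\<^bsub>K\<^esub> (n::nat) \<in> generate K {x}"
proof (induction n)
  case 0 then show ?case by (simp add: generate.one)
next
  case (Suc n) then show ?case
    by (simp add: generate.eng generate.incl)
qed

lemma first_in_gen:
  assumes G: "group G" and H: "group H" and a: "a \<in> carrier G" and b: "b \<in> carrier H"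
    and cop: "coprime (order G) (order H)"
  shows "(a, \<one>\<^bsub>H\<^esub>) \<in> generate (G \<times>\<times> H) {(a, b)}"
proof -
  interpret G: group G by fact
  interpret H: group H by fact
  have cop2: "coprime (H.ord b) (G.ord a)"
    using cop G.ord_dvd_group_order[OF a] H.ord_dvd_group_order[OF b]
    by (meson coprime_commute coprime_divisors)
  obtain u where u: "[H.ord b * u = Suc 0] (mod (G.ord a))"
    using cong_solve_coprime_nat[OF cop2] by blast
  have "a [^]\<^bsub>G\<^esub> (H.ord b * u) = a [^]\<^bsub>G\<^esub> (Suc 0)"
    using pow_mod_ord_aux[OF G a, of "H.ord b * u"] pow_mod_ord_aux[OF G a, of "Suc 0"] u
    unfolding cong_def by simp
  then have 1: "a [^]\<^bsub>G\<^esub> (H.ord b * u) = a" using a by simp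
  have 2: "b [^]\<^bsub>H\<^esub> (H.ord b * u) = \<one>\<^bsub>H\<^esub>"
    using b by (simp add: H.nat_pow_pow[symmetric])
  have "(a, b) [^]\<^bsub>G \<times>\<times> H\<^esub> (H.ord b * u) \<in> generate (G \<times>\<times> H) {(a, b)}"
    by (rule gen_pow_in_aux) (use DirProd_group[OF G H] a b in auto)
  then show ?thesis using 1 2 by (simp add: DirProd_pow_aux)
qed

lemma second_in_gen:
  assumes G: "group G" and H: "group H" and a: "a \<in> carrier G" and b: "b \<in> carrier H"
    and cop: "coprime (order G) (order H)"
  shows "(\<one>\<^bsub>G\<^esub>, b) \<in> generate (G \<times>\<times> H) {(a, b)}"
proof -
  interpret G: group G by fact
  interpret H: group H by fact
  have cop2: "coprime (G.ord a) (H.ord b)"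
    using cop G.ord_dvd_group_order[OF a] H.ord_dvd_group_order[OF b]
    by (meson coprime_divisors)
  obtain u where u: "[G.ord a * u = Suc 0] (mod (H.ord b))"
    using cong_solve_coprime_nat[OF cop2] by blast
  have "b [^]\<^bsub>H\<^esub> (G.ord a * u) = b [^]\<^bsub>H\<^esub> (Suc 0)"
    using pow_mod_ord_aux[OF H b, of "G.ord a * u"] pow_mod_ord_aux[OF H b, of "Suc 0"] u
    unfolding cong_def by simp
  then have 1: "b [^]\<^bsub>H\<^esub> (G.ord a * u) = b" using b by simp
  have 2: "a [^]\<^bsub>G\<^esub> (G.ord a * u) = \<one>\<^bsub>G\<^esub>"
    using a by (simp add: G.nat_pow_pow[symmetric])
  have "(a, b) [^]\<^bsub>G \<times>\<times> H\<^esub> (G.ord a * u) \<in> generate (G \<times>\<times> H) {(a, b)}"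
    by (rule gen_pow_in_aux) (use DirProd_group[OF G H] a b in auto)
  then show ?thesis using 1 2 by (simp add: DirProd_pow_aux)
qed

lemma cyclic_aux:
  assumes K: "group K" and S: "S \<subseteq> carrier K" and z: "z \<in> carrier K"
    and S1: "S \<subseteq> generate K {z}" and z1: "z \<in> generate K S"
  shows "cyclic_group (subgroup_generated K S)"
proof -
  interpret group K by fact
  have "generate K S \<subseteq> generate K {z}"
    using generate_subgroup_incl[OF S1 generate_is_subgroup] z by auto
  moreover have "generate K {z} \<subseteq> generate K S"
    using generate_subgroup_incl[of "{z}" "generate K S"] generate_is_subgroup[OF S] z1 by auto
  ultimately have "subgroup_generated K S = subgroup_generated K {z}"
    unfolding subgroup_generated_def using S z
    by (metis Int_absorb1 empty_subsetI insert_subset subset_antisym)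
  then show ?thesis using cyclic_group_generated by simp
qed


lemma adj_sym: "cg_adj K x y = cg_adj K y x"
  unfolding cg_adj_def by (auto simp: insert_commute)

definition W :: "('a, 'b) monoid_scheme \<Rightarrow> 'a \<Rightarrow> 'a \<Rightarrow> nat \<Rightarrow> bool" where
  "W K x z k \<longleftrightarrow> (\<exists>m\<le>k. cg_walk K x z m)"

lemma W0: "x \<in> cg_vertices K \<Longrightarrow> W K x x 0"
  unfolding W_def cg_walk_def by (rule exI[of _ 0]) (auto intro!: exI[of _ "[x]"])

lemma walk_step:
  assumes "cg_adj K x y" "cg_walk K y z n"
  shows "cg_walk K x z (Suc n)"
proof -
  obtain vs where vs: "length vs = Suc n" "set vs \<subseteq> cg_vertices K" "hd vs = y" "last vs = z"
    "\<forall>i<n. cg_adj K (vs ! i) (vs ! Suc i)"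
    using assms(2) unfolding cg_walk_def by blast
  have x: "x \<in> cg_vertices K" using assms(1) unfolding cg_adj_def by blast
  have v0: "vs ! 0 = y" using vs(1,3) by (cases vs) auto
  show ?thesis unfolding cg_walk_def
  proof (intro exI[of _ "x # vs"] conjI allI impI)
    fix i assume "i < Suc n"
    then show "cg_adj K ((x # vs) ! i) ((x # vs) ! Suc i)"
      using assms(1) v0 vs(5) by (cases i) auto
  qed (use vs x in auto)
qed

lemma W_mono: "W K x z k \<Longrightarrow> k \<le> k' \<Longrightarrow> W K x z k'"
  unfolding W_def using le_trans by blast

lemma Wstep:
  assumes "x = y \<or> cg_adj K x y" "W K y z k"
  shows "W K x z (Suc k)"
  using assms walk_step unfolding W_def by (metis le_SucI Suc_le_mono)

theorem lemma4p1:
  fixes G :: "('a, 'c) monoid_scheme" and H :: "('b, 'd) monoid_scheme"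
  assumes "group G" and "group H"
    and "finite (carrier G)" and "finite (carrier H)"
    and "carrier G \<noteq> {\<one>\<^bsub>G\<^esub>}" and "carrier H \<noteq> {\<one>\<^bsub>H\<^esub>}"
    and "coprime (order G) (order H)"
  shows "cg_connected (G \<times>\<times> H) \<and> cg_diam (G \<times>\<times> H) \<le> 3"
proof -
  interpret G: group G by fact
  interpret H: group H by fact
  let ?K = "G \<times>\<times> H"
  have K: "group ?K" using DirProd_group assms(1,2) by blast
  have V: "cg_vertices ?K = carrier G \<times> carrier H - {(\<one>\<^bsub>G\<^esub>, \<one>\<^bsub>H\<^esub>)}"
    unfolding cg_vertices_def by simp
  have cyc: "cyclic_group (subgroup_generated ?K S)"
    if "S \<subseteq> {(a, \<one>\<^bsub>H\<^esub>), (\<one>\<^bsub>G\<^esub>, b), (a, b)}" "(a, b) \<in> generate ?K S"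
       "a \<in> carrier G" "b \<in> carrier H" for S a b
  proof (rule cyclic_aux[OF K _ _ _ that(2)])
    show "S \<subseteq> carrier ?K" using that by auto
    show "(a, b) \<in> carrier ?K" using that by auto
    show "S \<subseteq> generate ?K {(a, b)}"
      using that(1) first_in_gen[OF assms(1,2) that(3,4) assms(7)]
        second_in_gen[OF assms(1,2) that(3,4) assms(7)] generate.incl[of "(a,b)" "{(a,b)}"]
      by blast
  qed
  have A1: "cg_adj ?K (a, \<one>\<^bsub>H\<^esub>) (\<one>\<^bsub>G\<^esub>, b)"
    if "a \<in> carrier G" "b \<in> carrier H" "a \<noteq> \<one>\<^bsub>G\<^esub>" "b \<noteq> \<one>\<^bsub>H\<^esub>" for a b
  proof -
    have "(a, \<one>\<^bsub>H\<^esub>) \<otimes>\<^bsub>?K\<^esub> (\<one>\<^bsub>G\<^esub>, b) \<in> generate ?K {(a, \<one>\<^bsub>H\<^esub>), (\<one>\<^bsub>G\<^esub>, b)}"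
      by (intro generate.eng generate.incl) auto
    then have "(a, b) \<in> generate ?K {(a, \<one>\<^bsub>H\<^esub>), (\<one>\<^bsub>G\<^esub>, b)}" using that by simp
    then show ?thesis unfolding cg_adj_def V using that cyc[of "{(a, \<one>\<^bsub>H\<^esub>), (\<one>\<^bsub>G\<^esub>, b)}" a b]
      by auto
  qed
  have A2: "cg_adj ?K (a, b) (a, \<one>\<^bsub>H\<^esub>)"
    if "a \<in> carrier G" "b \<in> carrier H" "a \<noteq> \<one>\<^bsub>G\<^esub>" "b \<noteq> \<one>\<^bsub>H\<^esub>" for a b
  proof -
    have "(a, b) \<in> generate ?K {(a, b), (a, \<one>\<^bsub>H\<^esub>)}"
      by (intro generate.incl) auto
    then show ?thesis unfolding cg_adj_def V using that cyc[of "{(a, b), (a, \<one>\<^bsub>H\<^esub>)}" a b]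
      by auto
  qed
  have A3: "cg_adj ?K (a, b) (\<one>\<^bsub>G\<^esub>, b)"
    if "a \<in> carrier G" "b \<in> carrier H" "a \<noteq> \<one>\<^bsub>G\<^esub>" "b \<noteq> \<one>\<^bsub>H\<^esub>" for a b
  proof -
    have "(a, b) \<in> generate ?K {(a, b), (\<one>\<^bsub>G\<^esub>, b)}"
      by (intro generate.incl) auto
    then show ?thesis unfolding cg_adj_def V using that cyc[of "{(a, b), (\<one>\<^bsub>G\<^esub>, b)}" a b]
      by auto
  qed
  obtain a0 where a0: "a0 \<in> carrier G" "a0 \<noteq> \<one>\<^bsub>G\<^esub>" using assms(5) G.one_closed by blast
  obtain b0 where b0: "b0 \<in> carrier H" "b0 \<noteq> \<one>\<^bsub>H\<^esub>" using assms(6) H.one_closed by blast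
  have main: "W ?K x y 3" if x: "x \<in> cg_vertices ?K" and y: "y \<in> cg_vertices ?K" for x y
  proof -
    obtain g1 h1 where x1: "x = (g1, h1)" by (cases x)
    obtain g2 h2 where y1: "y = (g2, h2)" by (cases y)
    have g1: "g1 \<in> carrier G" and h1: "h1 \<in> carrier H" and ne1: "g1 \<noteq> \<one>\<^bsub>G\<^esub> \<or> h1 \<noteq> \<one>\<^bsub>H\<^esub>"
      using x x1 V by auto
    have g2: "g2 \<in> carrier G" and h2: "h2 \<in> carrier H" and ne2: "g2 \<noteq> \<one>\<^bsub>G\<^esub> \<or> h2 \<noteq> \<one>\<^bsub>H\<^esub>"
      using y y1 V by auto
    have y0: "W ?K y y 0" using W0 y .
    have Ws: "W ?K u y (Suc k)" if "u = v \<or> cg_adj ?K u v" "W ?K v y k" for u v k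
      by (rule Wstep[OF that])
    have sym: "cg_adj ?K u v \<Longrightarrow> cg_adj ?K v u" for u v by (rule iffD1[OF adj_sym])
    consider "g1 \<noteq> \<one>\<^bsub>G\<^esub>" "h2 \<noteq> \<one>\<^bsub>H\<^esub>" | "h1 \<noteq> \<one>\<^bsub>H\<^esub>" "g2 \<noteq> \<one>\<^bsub>G\<^esub>"
      | "g1 = \<one>\<^bsub>G\<^esub>" "g2 = \<one>\<^bsub>G\<^esub>" | "h1 = \<one>\<^bsub>H\<^esub>" "h2 = \<one>\<^bsub>H\<^esub>"
      using ne1 ne2 by argo
    then show ?thesis
    proof cases
      case 1
      have e1: "(\<one>\<^bsub>G\<^esub>, h2) = y \<or> cg_adj ?K (\<one>\<^bsub>G\<^esub>, h2) y"
      proof (cases "g2 = \<one>\<^bsub>G\<^esub>")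
        case True then show ?thesis using y1 by simp
      next
        case False then show ?thesis using sym[OF A3[OF g2 h2 False 1(2)]] y1 by simp
      qed
      have e2: "cg_adj ?K (g1, \<one>\<^bsub>H\<^esub>) (\<one>\<^bsub>G\<^esub>, h2)" using A1[OF g1 h2 1] .
      have e3: "x = (g1, \<one>\<^bsub>H\<^esub>) \<or> cg_adj ?K x (g1, \<one>\<^bsub>H\<^esub>)"
      proof (cases "h1 = \<one>\<^bsub>H\<^esub>")
        case True then show ?thesis using x1 by simp
      next
        case False then show ?thesis using A2[OF g1 h1 1(1) False] x1 by simp
      qed
      have "W ?K x y (Suc (Suc (Suc 0)))" by (rule Ws[OF e3 Ws[OF disjI2[OF e2] Ws[OF e1 y0]]])
      then show ?thesis by (simp add: numeral_eq_Suc)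
    next
      case 2
      have e1: "(g2, \<one>\<^bsub>H\<^esub>) = y \<or> cg_adj ?K (g2, \<one>\<^bsub>H\<^esub>) y"
      proof (cases "h2 = \<one>\<^bsub>H\<^esub>")
        case True then show ?thesis using y1 by simp
      next
        case False then show ?thesis using sym[OF A2[OF g2 h2 2(2) False]] y1 by simp
      qed
      have e2: "cg_adj ?K (\<one>\<^bsub>G\<^esub>, h1) (g2, \<one>\<^bsub>H\<^esub>)" using sym[OF A1[OF g2 h1 2(2) 2(1)]] .
      have e3: "x = (\<one>\<^bsub>G\<^esub>, h1) \<or> cg_adj ?K x (\<one>\<^bsub>G\<^esub>, h1)"
      proof (cases "g1 = \<one>\<^bsub>G\<^esub>")
        case True then show ?thesis using x1 by simp
      next
        case False then show ?thesis using A3[OF g1 h1 False 2(1)] x1 by simp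
      qed
      have "W ?K x y (Suc (Suc (Suc 0)))" by (rule Ws[OF e3 Ws[OF disjI2[OF e2] Ws[OF e1 y0]]])
      then show ?thesis by (simp add: numeral_eq_Suc)
    next
      case 3
      have h1n: "h1 \<noteq> \<one>\<^bsub>H\<^esub>" and h2n: "h2 \<noteq> \<one>\<^bsub>H\<^esub>" using ne1 ne2 3 by auto
      have e1: "cg_adj ?K (a0, \<one>\<^bsub>H\<^esub>) y" using A1[OF a0(1) h2 a0(2) h2n] y1 3 by simp
      have e2: "x = y \<or> cg_adj ?K x (a0, \<one>\<^bsub>H\<^esub>)" using sym[OF A1[OF a0(1) h1 a0(2) h1n]] x1 3 by simp
      show ?thesis
      proof (cases "x = y")
        case True then have "W ?K x y 0" using W0[OF y] by simp
        then show ?thesis by (rule W_mono) simp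
      next
        case False
        have "W ?K x y (Suc (Suc 0))" using e2 False by (intro Ws[OF _ Ws[OF disjI2[OF e1] y0]]) simp
        then show ?thesis by (rule W_mono) simp
      qed
    next
      case 4
      have g1n: "g1 \<noteq> \<one>\<^bsub>G\<^esub>" and g2n: "g2 \<noteq> \<one>\<^bsub>G\<^esub>" using ne1 ne2 4 by auto
      have e1: "cg_adj ?K (\<one>\<^bsub>G\<^esub>, b0) y" using sym[OF A1[OF g2 b0(1) g2n b0(2)]] y1 4 by simp
      have e2: "x = y \<or> cg_adj ?K x (\<one>\<^bsub>G\<^esub>, b0)" using A1[OF g1 b0(1) g1n b0(2)] x1 4 by simp
      show ?thesis
      proof (cases "x = y")
        case True then have "W ?K x y 0" using W0[OF y] by simp
        then show ?thesis by (rule W_mono) simp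
      next
        case False
        have "W ?K x y (Suc (Suc 0))" using e2 False by (intro Ws[OF _ Ws[OF disjI2[OF e1] y0]]) simp
        then show ?thesis by (rule W_mono) simp
      qed
    qed
  qed
  have conn: "cg_connected ?K"
    unfolding cg_connected_def using main unfolding W_def by blast
  have dist: "cg_dist ?K x y \<le> 3" if "x \<in> cg_vertices ?K" "y \<in> cg_vertices ?K" for x y
  proof -
    have "W ?K x y 3" by (rule main[OF that])
    then obtain m where "m \<le> 3" "cg_walk ?K x y m" unfolding W_def by blast
    then show ?thesis unfolding cg_dist_def by (meson Least_le le_trans)
  qed
  let ?S = "{cg_dist ?K x y | x y. x \<in> cg_vertices ?K \<and> y \<in> cg_vertices ?K}"
  have "?S \<subseteq> {..3}" using dist by auto
  then have fin: "finite ?S" using finite_subset by blast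
  have "(a0, \<one>\<^bsub>H\<^esub>) \<in> cg_vertices ?K" using V a0 by auto
  then have ne: "?S \<noteq> {}" by blast
  have "cg_diam ?K \<le> 3" unfolding cg_diam_def
    using Max.boundedI[OF fin ne] dist by blast
  with conn show ?thesis by blast
qed

end
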